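(* Suppose $\mathcal{G}_k\equiv\mathcal{G}_*$ for all $k$, for a fixed digraph $\mathcal{G}_*$ on $\mathcal{V}=\{1,\dots,n\}$. (i) For every algorithm in $\mathcal{A}_{\rm ave}$, if global asymptotic consensus is achieved then $\mathcal{G}_*$ is quasi-strongly connected. (ii) For the algorithm in $\mathcal{A}_{\rm max}$, global finite-time consensus is achieved if and only if $\mathcal{G}_*$ is strongly connected.
   Context: Network of nodes $\mathcal{V}=\{1,\dots,n\}$, $n\ge 3$, discrete time, states $x_i(k)\in\mathbb{R}$. At each time $k$ a digraph $\mathcal{G}_k=(\mathcal{V},\mathcal{E}_k)$ is given; $j$ is a neighbor of $i$ at time $k$ if $(j,i)\in\mathcal{E}_k$, every node is always its own neighbor; $\mathcal{N}_i(k)$ is the neighbor set. The algorithm is $$x_i(k+1)=\eta_k x_i(k)+\alpha_k\min_{j\in\mathcal{N}_i(k)}x_j(k)+(1-\eta_k-\alpha_k)\max_{j\in\mathcal{N}_i(k)}x_j(k),$$ with node-independent parameters $\eta_k\ge0,\alpha_k\ge0,\eta_k+\alpha_k\le1$. $\mathcal{A}_{\rm ave}$: $\eta_k\in(0,1]$, $\alpha_k\in[0,1-\eta_k]$ for all $k$. $\mathcal{A}_{\rm max}$: $\eta_k=\alpha_k=0$ for all $k$ (i.e. $x_i(k+1)=\max_{j\in\mathcal{N}_i(k)}x_j(k)$). The iteration starts at time $k_0$ with $x(k_0)=x^0$. Asymptotic consensus: there is $z_*$ with $x_i(k)\to z_*$ for all $i$; finite-time consensus: there are $z_*$ and an integer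 $T_*$ with $x_i(T_* )=z_*$ for all $i$; "global" means for all $k_0\ge0$ and all $x^0\in\mathbb{R}^n$. A node $j$ is reachable from $i$ if there is a directed path from $i$ to $j$ (each node is reachable from itself). A digraph is strongly connected if every node is reachable from every other node, and quasi-strongly connected if it has a center, i.e. a node from which every node is reachable. *)

theory Defs
  imports "HOL-Analysis.Analysis"
begin

text \<open>Nodes form a finite type 'n. The fixed digraph is an edge relation E,
  (j,i) \<in> E meaning j is a neighbour of i. Every node is its own neighbour.\<close>

definition nbrs :: "('n \<times> 'n) set \<Rightarrow> 'n \<Rightarrow> 'n set" where
  "nbrs E i = {j. (j, i) \<in> E} \<union> {i}"

definition step :: "real \<Rightarrow> real \<Rightarrow> ('n::finite \<times> 'n) set \<Rightarrow> ('n \<Rightarrow> real) \<Rightarrow> ('n \<Rightarrow> real)" where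
  "step eta alpha E x = (\<lambda>i. eta * x i + alpha * Min (x ` nbrs E i)
       + (1 - eta - alpha) * Max (x ` nbrs E i))"

text \<open>traj eta alpha E k0 x0 m is the state x(k0 + m) of the iteration started
  at time k0 with x(k0) = x0 (time-invariant graph E).\<close>
fun traj :: "(nat \<Rightarrow> real) \<Rightarrow> (nat \<Rightarrow> real) \<Rightarrow> ('n::finite \<times> 'n) set \<Rightarrow> nat
              \<Rightarrow> ('n \<Rightarrow> real) \<Rightarrow> nat \<Rightarrow> ('n \<Rightarrow> real)" where
  "traj eta alpha E k0 x0 0 = x0"
| "traj eta alpha E k0 x0 (Suc m) =
     step (eta (k0 + m)) (alpha (k0 + m)) E (traj eta alpha E k0 x0 m)"

definition in_A_ave :: "(nat \<Rightarrow> real) \<Rightarrow> (nat \<Rightarrow> real) \<Rightarrow> bool" where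
  "in_A_ave eta alpha \<longleftrightarrow> (\<forall>k. 0 < eta k \<and> eta k \<le> 1 \<and> 0 \<le> alpha k \<and> alpha k \<le> 1 - eta k)"

definition global_asym_consensus ::
  "(nat \<Rightarrow> real) \<Rightarrow> (nat \<Rightarrow> real) \<Rightarrow> ('n::finite \<times> 'n) set \<Rightarrow> bool" where
  "global_asym_consensus eta alpha E \<longleftrightarrow>
     (\<forall>k0 x0. \<exists>z. \<forall>i. (\<lambda>m. traj eta alpha E k0 x0 m i) \<longlonglongrightarrow> z)"

text \<open>Finite time consensus: some time T (\<ge> k0, i.e. T = k0 + m) at which all states coincide.\<close>
definition global_finite_consensus ::
  "(nat \<Rightarrow> real) \<Rightarrow> (nat \<Rightarrow> real) \<Rightarrow> ('n::finite \<times> 'n) set \<Rightarrow> bool" where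
  "global_finite_consensus eta alpha E \<longleftrightarrow>
     (\<forall>k0 x0. \<exists>z m. \<forall>i. traj eta alpha E k0 x0 m i = z)"

definition reachable :: "('n \<times> 'n) set \<Rightarrow> 'n \<Rightarrow> 'n \<Rightarrow> bool" where
  "reachable E i j \<longleftrightarrow> (i, j) \<in> E\<^sup>*"

definition strongly_connected :: "('n \<times> 'n) set \<Rightarrow> bool" where
  "strongly_connected E \<longleftrightarrow> (\<forall>i j. reachable E i j)"

definition quasi_strongly_connected :: "('n \<times> 'n) set \<Rightarrow> bool" where
  "quasi_strongly_connected E \<longleftrightarrow> (\<exists>c. \<forall>j. reachable E c j)"

end

theory Submission
  imports Defs
begin

lemma nbrs_self: "i \<in> nbrs E i" by (simp add: nbrs_def)
lemma nbrs_fin: "finite (nbrs (E::('n::finite \<times> 'n) set) i)" by simp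

lemma step_const:
  assumes "\<forall>j\<in>nbrs E i. x j = c"
  shows "step eta alpha (E::('n::finite \<times> 'n) set) x i = c"
proof -
  have "x ` nbrs E i = {c}" using assms nbrs_self[of i E] by force
  moreover have "x i = c" using assms nbrs_self[of i E] by blast
  ultimately show ?thesis by (simp add: step_def algebra_simps)
qed

lemma step_max: "step 0 0 (E::('n::finite \<times> 'n) set) x i = Max (x ` nbrs E i)"
  by (simp add: step_def)

lemma common_ancestor:
  assumes "\<forall>a b. \<exists>c. reachable E c a \<and> reachable E c b"
  shows "finite A \<Longrightarrow> \<exists>c. \<forall>j\<in>A. reachable E c j"
proof (induction A rule: finite_induct)
  case empty then show ?case by simp
next
  case (insert x A)
  then obtain c where c: "\<forall>j\<in>A. reachable E c j" by blast
  obtain d where "reachable E d x" "reachable E d c" using assms by blast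
  show ?case
  proof (intro exI ballI)
    fix j assume "j \<in> insert x A"
    then show "reachable E d j"
    proof
      assume "j = x" then show ?thesis using \<open>reachable E d x\<close> by simp
    next
      assume "j \<in> A" then have "(c, j) \<in> E\<^sup>*" using c by (simp add: reachable_def)
      with \<open>reachable E d c\<close> show ?thesis unfolding reachable_def by (rule rtrancl_trans)
    qed
  qed
qed

lemma part1:
  fixes E :: "('n::finite \<times> 'n) set"
  assumes "global_asym_consensus eta alpha E"
  shows "quasi_strongly_connected E"
proof (rule ccontr)
  assume nq: "\<not> quasi_strongly_connected E"
  have "\<not> (\<forall>a b. \<exists>c. reachable E c a \<and> reachable E c b)"
  proof
    assume "\<forall>a b. \<exists>c. reachable E c a \<and> reachable E c b"
    from common_ancestor[OF this, of UNIV] nq show False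
      by (simp add: quasi_strongly_connected_def)
  qed
  then obtain a b where ab: "\<And>c. \<not> (reachable E c a \<and> reachable E c b)" by blast
  define x0 where "x0 = (\<lambda>i. if reachable E i b then (1::real) else 0)"
  have inv: "(\<forall>i. reachable E i a \<longrightarrow> traj eta alpha E 0 x0 m i = 0)
           \<and> (\<forall>i. reachable E i b \<longrightarrow> traj eta alpha E 0 x0 m i = 1)" for m
  proof (induction m)
    case 0 then show ?case using ab by (auto simp: x0_def)
  next
    case (Suc m)
    have nb: "j \<in> nbrs E i \<Longrightarrow> reachable E i t \<Longrightarrow> reachable E j t" for i j t
      unfolding nbrs_def reachable_def by (auto intro: converse_rtrancl_into_rtrancl)
    show ?case
    proof (intro conjI allI impI)
      fix i assume r: "reachable E i a"
      then have "\<forall>j\<in>nbrs E i. traj eta alpha E 0 x0 m j = 0" using Suc nb by blast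
      then show "traj eta alpha E 0 x0 (Suc m) i = 0" by (simp add: step_const)
    next
      fix i assume r: "reachable E i b"
      then have "\<forall>j\<in>nbrs E i. traj eta alpha E 0 x0 m j = 1" using Suc nb by blast
      then show "traj eta alpha E 0 x0 (Suc m) i = 1" by (simp add: step_const)
    qed
  qed
  obtain z where z: "\<forall>i. (\<lambda>m. traj eta alpha E 0 x0 m i) \<longlonglongrightarrow> z"
    using assms unfolding global_asym_consensus_def by blast
  have ra: "reachable E a a" "reachable E b b" by (auto simp: reachable_def)
  have "(\<lambda>m. traj eta alpha E 0 x0 m a) = (\<lambda>m. 0)" using inv ra by auto
  with z have "z = 0" by (metis LIMSEQ_const_iff)
  moreover have "(\<lambda>m. traj eta alpha E 0 x0 m b) = (\<lambda>m. 1)" using inv ra by auto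
  with z have "z = 1" by (metis LIMSEQ_const_iff)
  ultimately show False by simp
qed

lemma part2a:
  fixes E :: "('n::finite \<times> 'n) set"
  assumes "global_finite_consensus (\<lambda>_. 0) (\<lambda>_. 0) E"
  shows "strongly_connected E"
proof (rule ccontr)
  assume "\<not> strongly_connected E"
  then obtain a b where ab: "\<not> reachable E a b" by (auto simp: strongly_connected_def)
  define x0 where "x0 = (\<lambda>i. if reachable E a i then (1::real) else 0)"
  have fixp: "step 0 0 E x0 = x0"
  proof
    fix i
    show "step 0 0 E x0 i = x0 i"
    proof (cases "reachable E a i")
      case True
      have "Max (x0 ` nbrs E i) = 1"
        by (rule Max_eqI) (use True nbrs_self[of i E] in \<open>auto simp: x0_def\<close>)
      then show ?thesis using True by (simp add: step_max x0_def)
    next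
      case False
      have "\<forall>j\<in>nbrs E i. x0 j = 0"
      proof
        fix j assume "j \<in> nbrs E i"
        then have "(j, i) \<in> E \<or> j = i" by (auto simp: nbrs_def)
        then have "\<not> reachable E a j" using False unfolding reachable_def
          by (metis rtrancl_into_rtrancl)
        then show "x0 j = 0" by (simp add: x0_def)
      qed
      then show ?thesis using False step_const by (simp add: x0_def)
    qed
  qed
  have "traj (\<lambda>_. 0) (\<lambda>_. 0) E 0 x0 m = x0" for m
    by (induction m) (simp_all add: fixp)
  moreover obtain z m where "\<forall>i. traj (\<lambda>_. 0) (\<lambda>_. 0) E 0 x0 m i = z"
    using assms unfolding global_finite_consensus_def by blast
  ultimately have "x0 a = x0 b" by simp
  then show False using ab by (simp add: x0_def reachable_def)
qed

lemma leave:
  assumes "(a, b) \<in> E\<^sup>*" "a \<in> R" "b \<notin> R"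
  shows "\<exists>u v. (u, v) \<in> E \<and> u \<in> R \<and> v \<notin> R"
  using assms by (induction rule: rtrancl_induct) auto

lemma part2b:
  fixes E :: "('n::finite \<times> 'n) set"
  assumes sc: "strongly_connected E"
  shows "global_finite_consensus (\<lambda>_. 0) (\<lambda>_. 0) E"
  unfolding global_finite_consensus_def
proof (intro allI)
  fix k0 :: nat and x0 :: "'n \<Rightarrow> real"
  define M where "M = Max (range x0)"
  obtain j0 where j0: "x0 j0 = M"
    unfolding M_def by (metis Max_in UNIV_not_empty finite finite_imageI image_iff image_is_empty)
  define T where "T = traj (\<lambda>_. 0) (\<lambda>_. 0) E k0 x0"
  have Tsuc: "T (Suc m) = step 0 0 E (T m)" for m by (simp add: T_def)
  have le: "\<forall>i. T m i \<le> M" for m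
  proof (induction m)
    case 0 then show ?case by (auto simp: T_def M_def intro!: Max_ge)
  next
    case (Suc m) show ?case
    proof (intro allI)
      fix i
      have "T m ` nbrs E i \<noteq> {}" using nbrs_self[of i E] by blast
      then show "T (Suc m) i \<le> M" using Suc
        by (simp add: Tsuc step_max Max_le_iff[OF finite_imageI[OF nbrs_fin]])
    qed
  qed
  define R where "R m = {i. T m i = M}" for m
  have mono: "R m \<subseteq> R (Suc m)" for m
  proof
    fix i assume "i \<in> R m"
    then have "T m i = M" by (simp add: R_def)
    then have "Max (T m ` nbrs E i) \<ge> M"
      by (metis Max_ge finite_imageI image_eqI nbrs_fin nbrs_self)
    with le[of "Suc m"] show "i \<in> R (Suc m)"
      by (simp add: R_def Tsuc step_max) (metis order_antisym)
  qed
  have j0R: "j0 \<in> R m" for m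
  proof (induction m)
    case 0 then show ?case by (simp add: R_def T_def j0)
  next
    case (Suc m) then show ?case using mono by blast
  qed
  have grow: "R m = UNIV \<or> card (R m) \<ge> m + 1" for m
  proof (induction m)
    case 0 then show ?case using j0R[of 0] by (auto simp: card_gt_0_iff Suc_le_eq)
  next
    case (Suc m)
    show ?case
    proof (cases "R m = UNIV")
      case True then show ?thesis using mono[of m] by auto
    next
      case False
      then obtain v where v: "v \<notin> R m" by auto
      have "(j0, v) \<in> E\<^sup>*" using sc by (simp add: strongly_connected_def reachable_def)
      then obtain u w where uw: "(u, w) \<in> E" "u \<in> R m" "w \<notin> R m"
        using leave j0R v by metis
      have "u \<in> nbrs E w" using uw by (simp add: nbrs_def)
      moreover have "T m u = M" using uw(2) by (simp add: R_def)
      ultimately have "Max (T m ` nbrs E w) \<ge> M"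
        by (metis Max_ge finite_imageI image_eqI nbrs_fin)
      with le[of "Suc m"] have "w \<in> R (Suc m)"
        by (simp add: R_def Tsuc step_max) (metis order_antisym)
      then have "insert w (R m) \<subseteq> R (Suc m)" using mono by blast
      then have "card (insert w (R m)) \<le> card (R (Suc m))" by (simp add: card_mono)
      then have "card (R m) + 1 \<le> card (R (Suc m))" using uw(3) by simp
      then show ?thesis using Suc False by auto
    qed
  qed
  have "R CARD('n) = UNIV"
  proof (rule ccontr)
    assume "R CARD('n) \<noteq> UNIV"
    then have "card (R CARD('n)) \<ge> CARD('n) + 1" using grow by blast
    moreover have "card (R CARD('n)) \<le> CARD('n)" by (simp add: card_mono)
    ultimately show False by simp
  qed
  then have "\<forall>i. T CARD('n) i = M" by (auto simp: R_def)
  then show "\<exists>z m. \<forall>i. traj (\<lambda>_. 0) (\<lambda>_. 0) E k0 x0 m i = z" unfolding T_def by blast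
qed

theorem theorem3:
  fixes E :: "('n::finite \<times> 'n) set"
  assumes "CARD('n) \<ge> 3"
  shows "(\<forall>eta alpha. in_A_ave eta alpha \<longrightarrow> global_asym_consensus eta alpha E
            \<longrightarrow> quasi_strongly_connected E)
       \<and> (global_finite_consensus (\<lambda>_. 0) (\<lambda>_. 0) E \<longleftrightarrow> strongly_connected E)"
  using part1 part2a part2b by blast

end
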